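(* The Kurepa conjecture, namely that $\gcd({!n},n!)=2$ for every integer $n\ge2$, is equivalent to the statement that $\gcd\big(\mathbb{F}_n,(n+1)!\big)=2$ for every integer $n\ge1$.
   Context: For a positive integer $n$, the Kurepa left factorial is ${!n}=\sum_{m=0}^{n-1}m!$. For $n\ge1$, $\mathbb{F}_n=\sum_{k=0}^n k!$. *)

theory Defs
  imports Main
begin

definition left_fact :: "nat \<Rightarrow> nat" where
  "left_fact n = (\<Sum>m<n. fact m)"

definition fact_sum :: "nat \<Rightarrow> nat" where
  "fact_sum n = (\<Sum>k\<le>n. fact k)"

end

theory Submission
  imports Defs
begin

lemma fs_lf: "fact_sum n = left_fact (Suc n)"
  unfolding fact_sum_def left_fact_def by (simp add: lessThan_Suc_atMost)

theorem theorem17: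
  shows "(\<forall>n::nat. n \<ge> 2 \<longrightarrow> gcd (left_fact n) (fact n) = 2) \<longleftrightarrow>
         (\<forall>n::nat. n \<ge> 1 \<longrightarrow> gcd (fact_sum n) (fact (n + 1)) = 2)"
proof
  assume H: "\<forall>n::nat. n \<ge> 2 \<longrightarrow> gcd (left_fact n) (fact n) = 2"
  show "\<forall>n::nat. n \<ge> 1 \<longrightarrow> gcd (fact_sum n) (fact (n + 1)) = 2"
  proof (intro allI impI)
    fix n :: nat assume "n \<ge> 1"
    then have "Suc n \<ge> 2" by simp
    then have "gcd (left_fact (Suc n)) (fact (Suc n)) = 2" using H by blast
    then show "gcd (fact_sum n) (fact (n + 1)) = 2" by (simp only: fs_lf Suc_eq_plus1)
  qed
next
  assume H: "\<forall>n::nat. n \<ge> 1 \<longrightarrow> gcd (fact_sum n) (fact (n + 1)) = 2"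
  show "\<forall>n::nat. n \<ge> 2 \<longrightarrow> gcd (left_fact n) (fact n) = 2"
  proof (intro allI impI)
    fix n :: nat assume n: "n \<ge> 2"
    then obtain m where m: "n = Suc m" "m \<ge> 1" by (cases n) auto
    have "gcd (fact_sum m) (fact (m + 1)) = (2::nat)" using H m(2) by blast
    then show "gcd (left_fact n) (fact n) = 2" by (simp only: m(1) fs_lf Suc_eq_plus1)
  qed
qed

end
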